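(* Let $X$ be any normed space. Then $\mathcal{A}(X)=\mathcal{R}(X)\neq\emptyset$.
   Context: For a normed space $X$ let $S_X$ be its unit sphere, equipped with the norm topology and the kernel $k(x,y)=\|x-y\|$. For a positive regular Borel measure $\mu$ its potential is $U^\mu(x)=\int k(x,y)\,d\mu(y)$. Let $\mathfrak{M}_1(S_X)$ denote the regular Borel probability measures on $X$ concentrated on $S_X$, and $\mathfrak{M}_1^{\#}(S_X)$ those with finite support in $S_X$. For $\mu$ put $A(\mu,S_X):=\overline{\mathrm{conv}}\{U^\mu(x):x\in S_X\}=[\inf_{S_X}U^\mu,\sup_{S_X}U^\mu]$. Then $\mathcal{A}(X):=\bigcap_{\mu\in\mathfrak{M}_1(S_X)}A(\mu,S_X)$ and $\mathcal{R}(X):=\bigcap_{\mu\in\mathfrak{M}_1^{\#}(S_X)}A(\mu,S_X)$ (equivalently $\mathcal{R}(X)=\bigcap_n\bigcap_{w_1,\dots,w_n\in S_X}\overline{\mathrm{conv}}\{\frac1n\sum_j\|x-w_j\|:x\in S_X\}$). *)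

theory Defs
  imports "HOL-Probability.Probability"
begin

definition potential :: "'a::real_normed_vector measure \<Rightarrow> 'a \<Rightarrow> real" where
  "potential \<mu> x = (\<integral>y. norm (x - y) \<partial>\<mu>)"

definition regular_measure :: "'a::topological_space measure \<Rightarrow> bool" where
  "regular_measure \<mu> \<longleftrightarrow>
     (\<forall>B\<in>sets borel.
        emeasure \<mu> B = (SUP K\<in>{K. compact K \<and> K \<subseteq> B}. emeasure \<mu> K) \<and>
        emeasure \<mu> B = (INF U\<in>{U. open U \<and> B \<subseteq> U}. emeasure \<mu> U))"

definition prob_measures_sphere :: "'a::real_normed_vector measure set" where
  "prob_measures_sphere =
     {\<mu>. sets \<mu> = sets borel \<and> prob_space \<mu> \<and> regular_measure \<mu> \<and>
          emeasure \<mu> (- sphere 0 1) = 0}"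

definition finsupp_prob_measures_sphere :: "'a::real_normed_vector measure set" where
  "finsupp_prob_measures_sphere =
     {\<mu>\<in>prob_measures_sphere. \<exists>F. finite F \<and> F \<subseteq> sphere 0 1 \<and> emeasure \<mu> (- F) = 0}"

definition A_set :: "'a::real_normed_vector measure \<Rightarrow> real set" where
  "A_set \<mu> = closure (convex hull (potential \<mu> ` sphere 0 1))"

definition calA :: "'a::real_normed_vector itself \<Rightarrow> real set" where
  "calA _ = (\<Inter>\<mu>\<in>(prob_measures_sphere :: 'a measure set). A_set \<mu>)"

definition calR :: "'a::real_normed_vector itself \<Rightarrow> real set" where
  "calR _ = (\<Inter>\<mu>\<in>(finsupp_prob_measures_sphere :: 'a measure set). A_set \<mu>)"

end

theory Submission
  imports Defs
begin


lemma closed_sphere_gen: "closed (sphere (a::'a::metric_space) r)"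
  unfolding sphere_def by (intro closed_Collect_eq continuous_intros)

lemma normdiff_meas: "(\<lambda>y. norm ((x::'a::real_normed_vector) - y)) \<in> borel_measurable borel"
  by (intro borel_measurable_continuous_onI continuous_intros)

lemma finmeas:
  fixes p :: "nat \<Rightarrow> 'a::real_normed_vector"
  assumes p: "\<And>i. i < n \<Longrightarrow> p i \<in> sphere 0 1" and w: "\<And>i. i < n \<Longrightarrow> 0 \<le> w i"
    and s: "(\<Sum>i<n. w i) = 1"
  shows "\<exists>\<nu>\<in>finsupp_prob_measures_sphere. \<forall>x. potential \<nu> x = (\<Sum>i<n. w i * norm (x - p i))"
proof -
  define f where "f i = (if i < n then w i else 0)" for i
  have f0: "\<And>i. 0 \<le> f i" using w by (simp add: f_def)
  have f1: "(\<integral>\<^sup>+i. f i \<partial>count_space UNIV) = 1"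
  proof -
    have "(\<integral>\<^sup>+i. f i \<partial>count_space UNIV) = (\<Sum>i\<in>{..<n}. ennreal (f i))"
      by (rule nn_integral_count_space') (auto simp: f_def)
    also have "\<dots> = ennreal (\<Sum>i<n. f i)" using f0 by (simp add: sum_ennreal)
    also have "(\<Sum>i<n. f i) = 1" using s by (simp add: f_def)
    finally show ?thesis by simp
  qed
  define W where "W = embed_pmf f"
  have pmfW: "pmf W i = f i" for i unfolding W_def using f0 f1 by (rule pmf_embed_pmf)
  have setW: "set_pmf W \<subseteq> {..<n}" unfolding W_def using f0 f1
    by (subst set_embed_pmf) (auto simp: f_def split: if_splits)
  define \<nu> where "\<nu> = distr (measure_pmf W) borel p"
  have pm: "p \<in> measurable (measure_pmf W) borel"
    by (simp add: measurable_cong_sets[OF sets_measure_pmf_count_space refl])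
  have sets\<nu>: "sets \<nu> = sets borel" by (simp add: \<nu>_def)
  have prob\<nu>: "prob_space \<nu>" unfolding \<nu>_def by (rule measure_pmf.prob_space_distr[OF pm])
  define F where "F = p ` {..<n}"
  have Ffin: "finite F" by (simp add: F_def)
  have FS: "F \<subseteq> sphere 0 1" using p by (auto simp: F_def)
  have key: "emeasure \<nu> B = emeasure \<nu> (B \<inter> F)" if B: "B \<in> sets borel" for B
  proof -
    have BF: "B \<inter> F \<in> sets borel" using B Ffin by (simp add: finite_imp_closed borel_closed sets.Int)
    have "emeasure \<nu> B = emeasure (measure_pmf W) (p -` B)"
      unfolding \<nu>_def by (simp add: emeasure_distr[OF pm B])
    also have "\<dots> = emeasure (measure_pmf W) (p -` (B \<inter> F))"
    proof (rule emeasure_eq_AE)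
      show "AE x in measure_pmf W. (x \<in> p -` B) = (x \<in> p -` (B \<inter> F))"
        by (rule AE_pmfI) (use setW in \<open>auto simp: F_def\<close>)
    qed auto
    also have "\<dots> = emeasure \<nu> (B \<inter> F)"
      unfolding \<nu>_def by (simp add: emeasure_distr[OF pm BF])
    finally show ?thesis .
  qed
  have reg: "regular_measure \<nu>"
    unfolding regular_measure_def
  proof (intro ballI conjI)
    fix B :: "'a set" assume B: "B \<in> sets borel"
    have BF: "B \<inter> F \<in> sets borel" using B Ffin by (simp add: finite_imp_closed borel_closed sets.Int)
    show "emeasure \<nu> B = (SUP K\<in>{K. compact K \<and> K \<subseteq> B}. emeasure \<nu> K)"
    proof (rule antisym)
      have "B \<inter> F \<in> {K. compact K \<and> K \<subseteq> B}" using Ffin by (auto intro: finite_imp_compact)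
      then have "emeasure \<nu> (B \<inter> F) \<le> (SUP K\<in>{K. compact K \<and> K \<subseteq> B}. emeasure \<nu> K)"
        by (rule SUP_upper)
      then show "emeasure \<nu> B \<le> (SUP K\<in>{K. compact K \<and> K \<subseteq> B}. emeasure \<nu> K)"
        using key[OF B] by simp
      show "(SUP K\<in>{K. compact K \<and> K \<subseteq> B}. emeasure \<nu> K) \<le> emeasure \<nu> B"
        by (rule SUP_least) (auto intro!: emeasure_mono simp: sets\<nu> B)
    qed
    show "emeasure \<nu> B = (INF U\<in>{U. open U \<and> B \<subseteq> U}. emeasure \<nu> U)"
    proof (rule antisym)
      show "emeasure \<nu> B \<le> (INF U\<in>{U. open U \<and> B \<subseteq> U}. emeasure \<nu> U)"
        by (rule INF_greatest) (auto intro!: emeasure_mono simp: sets\<nu>)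
      define U where "U = - (F - B)"
      have Uo: "open U" unfolding U_def using Ffin by (intro open_Compl finite_imp_closed) auto
      have "U \<in> {U. open U \<and> B \<subseteq> U}" using Uo by (auto simp: U_def)
      then have "(INF U\<in>{U. open U \<and> B \<subseteq> U}. emeasure \<nu> U) \<le> emeasure \<nu> U" by (rule INF_lower)
      also have "\<dots> = emeasure \<nu> (U \<inter> F)" using Uo by (intro key) auto
      also have "U \<inter> F = B \<inter> F" by (auto simp: U_def)
      also have "emeasure \<nu> (B \<inter> F) = emeasure \<nu> B" using key[OF B] by simp
      finally show "(INF U\<in>{U. open U \<and> B \<subseteq> U}. emeasure \<nu> U) \<le> emeasure \<nu> B" .
    qed
  qed
  have sph: "emeasure \<nu> (- sphere 0 1) = 0"
  proof -
    have "- sphere 0 1 \<inter> F = {}" using FS by auto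
    moreover have "- sphere (0::'a) 1 \<in> sets borel" by (intro borel_comp borel_closed closed_sphere_gen)
    ultimately show ?thesis using key[of "- sphere 0 1"] by simp
  qed
  have fin: "emeasure \<nu> (- F) = 0"
    using key[of "- F"] Ffin by (simp add: finite_imp_closed borel_closed)
  have "\<nu> \<in> finsupp_prob_measures_sphere"
    unfolding finsupp_prob_measures_sphere_def prob_measures_sphere_def
    using sets\<nu> prob\<nu> reg sph fin Ffin FS by blast
  moreover have "potential \<nu> x = (\<Sum>i<n. w i * norm (x - p i))" for x
  proof -
    have "potential \<nu> x = (\<integral>i. norm (x - p i) \<partial>measure_pmf W)"
      unfolding potential_def \<nu>_def by (rule integral_distr[OF pm normdiff_meas])
    also have "\<dots> = (\<Sum>i\<in>{..<n}. norm (x - p i) * pmf W i)"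
      by (rule integral_measure_pmf_real) (use setW in auto)
    also have "\<dots> = (\<Sum>i<n. w i * norm (x - p i))" by (simp add: pmfW f_def mult.commute)
    finally show ?thesis .
  qed
  ultimately show ?thesis by blast
qed


lemma sph2: "x \<in> sphere 0 1 \<Longrightarrow> y \<in> sphere 0 1 \<Longrightarrow> norm (x - y) \<le> (2::real)"
  for x y :: "'a::real_normed_vector"
  using norm_triangle_ineq4[of x y] by simp

lemma sphere_borel: "sphere (0::'a::real_normed_vector) 1 \<in> sets borel"
  by (intro borel_closed closed_sphere_gen)

context
  fixes \<mu> :: "'a::real_normed_vector measure"
  assumes M: "\<mu> \<in> prob_measures_sphere"
begin

lemma M1_sets: "sets \<mu> = sets borel" and M1_prob: "prob_space \<mu>"
  and M1_reg: "regular_measure \<mu>" and M1_null: "emeasure \<mu> (- sphere 0 1) = 0"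
  using M by (auto simp: prob_measures_sphere_def)

lemma M1_space: "space \<mu> = UNIV"
  using sets_eq_imp_space_eq[OF M1_sets] by simp


lemma M1_AE: "AE y in \<mu>. y \<in> sphere 0 1"
proof (rule AE_I')
  show "- sphere 0 1 \<in> null_sets \<mu>"
  proof (rule null_setsI[OF M1_null])
    show "- sphere 0 1 \<in> sets \<mu>" using borel_comp[OF sphere_borel] M1_sets by simp
  qed
qed blast

lemma M1_meas: "f \<in> borel_measurable borel \<Longrightarrow> f \<in> borel_measurable \<mu>"
  by (simp add: measurable_cong_sets[OF M1_sets refl])

lemma M1_int: "integrable \<mu> (\<lambda>y. norm (x - y))"
proof (rule Bochner_Integration.integrable_bound[where f="\<lambda>_::'a. norm x + 1"])
  interpret prob_space \<mu> by (rule M1_prob)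
  show "integrable \<mu> (\<lambda>_. norm x + 1)" by simp
  show "(\<lambda>y. norm (x - y)) \<in> borel_measurable \<mu>" by (rule M1_meas[OF normdiff_meas])
  show "AE y in \<mu>. norm (norm (x - y)) \<le> norm (norm x + 1)"
    using M1_AE
  proof eventually_elim
    fix y :: 'a assume "y \<in> sphere 0 1"
    then have y1: "norm y = 1" by simp
    have "norm (x - y) \<le> norm x + 1" using norm_triangle_ineq4[of x y] y1 by linarith
    moreover have "norm (norm x + 1) = norm x + 1" by (simp add: real_norm_def)
    ultimately show "norm (norm (x - y)) \<le> norm (norm x + 1)" by (simp only: real_norm_def abs_norm_cancel)
  qed
qed

lemma M1_pot_le: "x \<in> sphere 0 1 \<Longrightarrow> potential \<mu> x \<le> 2"
proof -
  assume x: "x \<in> sphere 0 1"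
  interpret prob_space \<mu> by (rule M1_prob)
  have "potential \<mu> x \<le> (\<integral>y. 2 \<partial>\<mu>)"
    unfolding potential_def
  proof (rule integral_mono_AE[OF M1_int])
    show "AE y in \<mu>. norm (x - y) \<le> 2"
      using M1_AE
    proof eventually_elim
      fix y :: 'a assume "y \<in> sphere 0 1"
      then show "norm (x - y) \<le> 2" by (rule sph2[OF x])
    qed
  qed simp
  then show ?thesis using prob_space by simp
qed

lemma M1_pot_ge: "0 \<le> potential \<mu> x"
  unfolding potential_def by (rule Bochner_Integration.integral_nonneg) simp

end


lemma approx:
  fixes \<mu> :: "'a::real_normed_vector measure"
  assumes M: "\<mu> \<in> prob_measures_sphere" and e: "e > 0" and s0: "s0 \<in> sphere (0::'a) 1"
  shows "\<exists>(N::nat) p w. (\<forall>i<N. p i \<in> sphere 0 1 \<and> 0 \<le> w i) \<and> (\<Sum>i<N. w i) = 1 \<and>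
           (\<forall>x. \<bar>potential \<mu> x - (\<Sum>i<N. w i * norm (x - p i))\<bar> \<le> e)"
proof -
  interpret prob_space \<mu> by (rule M1_prob[OF M])
  define d where "d = e / 4"
  have d: "d > 0" using e by (simp add: d_def)
  have sp: "space \<mu> = UNIV" by (rule M1_space[OF M])
  have setsM: "sets \<mu> = sets borel" by (rule M1_sets[OF M])
  have Sb: "sphere (0::'a) 1 \<in> sets borel" by (rule sphere_borel)
  have eS: "emeasure \<mu> (sphere 0 1) = 1"
  proof -
    have "emeasure \<mu> (sphere 0 1) + emeasure \<mu> (- sphere 0 1) = emeasure \<mu> (sphere 0 1 \<union> - sphere 0 1)"
      using Sb setsM by (intro plus_emeasure) auto
    then show ?thesis using M1_null[OF M] emeasure_space_1 sp by simp
  qed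
  have "ennreal (1 - d) < 1" using d by (cases "1 - d \<ge> 0") (auto simp: ennreal_lessI ennreal_neg)
  also have "1 = (SUP K\<in>{K. compact K \<and> K \<subseteq> sphere 0 1}. emeasure \<mu> K)"
    using M1_reg[OF M] Sb eS unfolding regular_measure_def by metis
  finally obtain K where K: "compact K" "K \<subseteq> sphere 0 1" and eK: "ennreal (1 - d) < emeasure \<mu> K"
    by (auto simp: less_SUP_iff)
  have Kb: "K \<in> sets borel" using K by (intro borel_closed compact_imp_closed)
  have mK: "1 - d \<le> measure \<mu> K"
  proof (cases "1 - d \<ge> 0")
    case True
    then show ?thesis using eK by (simp add: emeasure_eq_measure ennreal_less_iff)
  next
    case False
    then show ?thesis using measure_nonneg[of \<mu> K] by linarith
  qed
  have mnK: "measure \<mu> (- K) \<le> d"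
    using prob_compl[of K] Kb setsM sp mK by (simp add: Compl_eq_Diff_UNIV)
  obtain T where T: "T \<subseteq> K" "finite T" "K \<subseteq> (\<Union>c\<in>T. ball c d)"
  proof (rule compactE_image[OF K(1), of K "\<lambda>c. ball c d"])
    show "K \<subseteq> (\<Union>c\<in>K. ball c d)" using d by auto
  qed auto
  obtain cs where cs: "set cs = T" using finite_list[OF T(2)] by blast
  define n where "n = length cs"
  define c where "c i = cs ! i" for i
  have cK: "c i \<in> K" if "i < n" for i using that cs T(1) by (auto simp: c_def n_def)
  have cover: "\<exists>i<n. y \<in> ball (c i) d" if yK: "y \<in> K" for y
  proof -
    obtain t where t: "t \<in> T" "y \<in> ball t d" using T(3) yK by blast
    then obtain i where "i < length cs" "cs ! i = t" using cs by (metis in_set_conv_nth)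
    then show ?thesis using t(2) unfolding c_def n_def by blast
  qed
  define idx where "idx y = (if y \<in> K then (LEAST i. y \<in> ball (c i) d) else n)" for y
  have idxK: "idx y < n \<and> y \<in> ball (c (idx y)) d" if yK: "y \<in> K" for y
  proof -
    obtain i where i: "i < n" "y \<in> ball (c i) d" using cover[OF yK] by blast
    have "(LEAST i. y \<in> ball (c i) d) \<le> i" using i by (intro Least_le)
    moreover have "y \<in> ball (c (LEAST i. y \<in> ball (c i) d)) d" using i by (intro LeastI)
    ultimately show ?thesis using i yK by (simp add: idx_def)
  qed
  have idx_lt: "idx y < Suc n" for y using idxK[of y] by (cases "y \<in> K") (auto simp: idx_def)
  define A where "A i = {y. idx y = i}" for i
  have Ai: "A i = K \<inter> ball (c i) d - (\<Union>j<i. ball (c j) d)" if "i < n" for i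
  proof (intro set_eqI iffI)
    fix y assume "y \<in> A i"
    then have yK: "y \<in> K" and L: "(LEAST i. y \<in> ball (c i) d) = i"
      using that by (auto simp: A_def idx_def split: if_splits)
    have "y \<in> ball (c i) d" using idxK[OF yK] L by (simp add: idx_def yK)
    moreover have "y \<notin> ball (c j) d" if "j < i" for j
      using not_less_Least[of j "\<lambda>i. y \<in> ball (c i) d"] L that by simp
    ultimately show "y \<in> K \<inter> ball (c i) d - (\<Union>j<i. ball (c j) d)" using yK by auto
  next
    fix y assume y: "y \<in> K \<inter> ball (c i) d - (\<Union>j<i. ball (c j) d)"
    have "(LEAST i. y \<in> ball (c i) d) = i"
    proof (rule Least_equality)
      show "y \<in> ball (c i) d" using y by auto
      show "i \<le> j" if "y \<in> ball (c j) d" for j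
        using y that by (metis (no_types, lifting) DiffD2 UN_I lessThan_iff not_le_imp_less)
    qed
    then show "y \<in> A i" using y by (simp add: A_def idx_def)
  qed
  have An: "A n = - K"
  proof (intro set_eqI iffI)
    fix y assume "y \<in> A n"
    then have "idx y = n" by (simp add: A_def)
    then show "y \<in> - K" using idxK[of y] by auto
  next
    fix y assume "y \<in> - K"
    then show "y \<in> A n" by (simp add: A_def idx_def)
  qed
  have Ameas: "A i \<in> sets \<mu>" if "i < Suc n" for i
  proof (cases "i < n")
    case True
    have b1: "ball (c i) d \<in> sets borel" by (intro borel_open open_ball)
    have b2: "(\<Union>j<i. ball (c j) d) \<in> sets borel" by (intro borel_open open_UN ballI open_ball)
    have "K \<inter> ball (c i) d - (\<Union>j<i. ball (c j) d) \<in> sets borel"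
      by (rule sets.Diff[OF sets.Int[OF Kb b1] b2])
    then show ?thesis using Ai[OF True] setsM by simp
  next
    case False
    then have "i = n" using that by simp
    then show ?thesis using An borel_comp[OF Kb] setsM by simp
  qed
  have ind_eval: "(\<Sum>i<Suc n. indicator (A i) y * f i) = (f (idx y) :: real)" for y f
  proof -
    have "(\<Sum>i<Suc n. indicator (A i) y * f i) = (\<Sum>i<Suc n. if idx y = i then f i else 0)"
      by (intro sum.cong) (auto simp: A_def indicator_def)
    also have "\<dots> = f (idx y)" using idx_lt[of y] by (simp add: sum.delta')
    finally show ?thesis .
  qed
  define w where "w i = measure \<mu> (A i)" for i
  have finA: "emeasure \<mu> (A i) < \<infinity>" for i
    using emeasure_finite[of "A i"] by (simp add: less_top[symmetric])
  have indI: "integrable \<mu> (indicator (A i) :: 'a \<Rightarrow> real)" if "i < Suc n" for i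
    by (rule integrable_real_indicator[OF Ameas[OF that] finA])
  have intg: "integrable \<mu> (\<lambda>y. \<Sum>i<Suc n. indicator (A i) y * f i)" for f :: "nat \<Rightarrow> real"
    by (intro Bochner_Integration.integrable_sum integrable_mult_left indI) simp
  have gen: "(\<integral>y. (\<Sum>i<Suc n. indicator (A i) y * f i) \<partial>\<mu>) = (\<Sum>i<Suc n. w i * f i)" for f :: "nat \<Rightarrow> real"
  proof -
    have "(\<integral>y. (\<Sum>i<Suc n. indicator (A i) y * f i) \<partial>\<mu>) = (\<Sum>i<Suc n. (\<integral>y. indicator (A i) y * f i \<partial>\<mu>))"
      by (intro Bochner_Integration.integral_sum integrable_mult_left indI) simp
    also have "\<dots> = (\<Sum>i<Suc n. w i * f i)"
      by (intro sum.cong refl) (simp add: w_def sp)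
    finally show ?thesis .
  qed
  define p where "p i = (if i < n then c i else s0)" for i
  have wsum: "(\<Sum>i<Suc n. w i) = 1"
  proof -
    have "(\<Sum>i<Suc n. w i) = (\<Sum>i<Suc n. w i * 1)" by simp
    also have "\<dots> = (\<integral>y. (\<Sum>i<Suc n. indicator (A i) y * 1) \<partial>\<mu>)" by (rule gen[symmetric])
    also have "\<dots> = (\<integral>y. 1 \<partial>\<mu>)" by (subst ind_eval) simp
    also have "\<dots> = 1" using prob_space by simp
    finally show ?thesis .
  qed
  have wn: "w n = measure \<mu> (- K)" by (simp add: w_def An)
  have err: "\<bar>potential \<mu> x - (\<Sum>i<Suc n. w i * norm (x - p i))\<bar> \<le> e" for x
  proof -
    define G where "G y = (\<Sum>i<Suc n. indicator (A i) y * norm (x - p i))" for y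
    have GI: "integrable \<mu> G" unfolding G_def by (rule intg)
    have G_eval: "G y = norm (x - p (idx y))" for y unfolding G_def by (rule ind_eval)
    have FI: "integrable \<mu> (\<lambda>y. norm (x - y))" by (rule M1_int[OF M])
    have mK': "- K \<in> sets \<mu>" using borel_comp[OF Kb] setsM by simp
    have I1: "integrable \<mu> (\<lambda>y. d)" by simp
    have I2: "integrable \<mu> (\<lambda>y. 2 * indicator (- K) y :: real)"
      by (intro integrable_mult_right integrable_real_indicator mK')
         (use emeasure_finite[of "- K"] in \<open>simp add: less_top[symmetric]\<close>)
    have HI: "integrable \<mu> (\<lambda>y. d + 2 * indicator (- K) y)"
      by (rule Bochner_Integration.integrable_add[OF I1 I2])
    have "potential \<mu> x - (\<Sum>i<Suc n. w i * norm (x - p i)) = (\<integral>y. norm (x - y) - G y \<partial>\<mu>)"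
    proof -
      have "(\<Sum>i<Suc n. w i * norm (x - p i)) = integral\<^sup>L \<mu> G"
        unfolding G_def by (rule gen[symmetric])
      then show ?thesis
        unfolding potential_def by (simp add: Bochner_Integration.integral_diff[OF FI GI])
    qed
    then have "\<bar>potential \<mu> x - (\<Sum>i<Suc n. w i * norm (x - p i))\<bar> \<le> (\<integral>y. \<bar>norm (x - y) - G y\<bar> \<partial>\<mu>)"
      by (simp add: integral_abs_bound)
    also have "\<dots> \<le> (\<integral>y. d + 2 * indicator (- K) y \<partial>\<mu>)"
    proof (rule integral_mono_AE)
      show "integrable \<mu> (\<lambda>y. \<bar>norm (x - y) - G y\<bar>)" using FI GI by auto
      show "integrable \<mu> (\<lambda>y. d + 2 * indicator (- K) y)" by (rule HI)
      show "AE y in \<mu>. \<bar>norm (x - y) - G y\<bar> \<le> d + 2 * indicator (- K) y"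
        using M1_AE[OF M]
      proof eventually_elim
        fix y :: 'a assume yS: "y \<in> sphere 0 1"
        have tri: "\<bar>norm (x - y) - G y\<bar> \<le> norm (y - p (idx y))"
          unfolding G_eval using norm_triangle_ineq3[of "x - y" "x - p (idx y)"]
          by (simp add: norm_minus_commute)
        show "\<bar>norm (x - y) - G y\<bar> \<le> d + 2 * indicator (- K) y"
        proof (cases "y \<in> K")
          case True
          then have "norm (y - p (idx y)) < d"
            using idxK[OF True] by (simp add: p_def dist_norm norm_minus_commute)
          then show ?thesis using tri True by simp
        next
          case False
          then have "norm (y - p (idx y)) \<le> 2"
            using s0 yS sph2[of y s0] by (simp add: p_def idx_def)
          then show ?thesis using tri False d by simp
        qed
      qed
    qed
    also have "\<dots> = d + 2 * measure \<mu> (- K)"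
      using prob_space sp by (simp add: Bochner_Integration.integral_add[OF I1 I2])
    also have "\<dots> \<le> e" using mnK d by (simp add: d_def)
    finally show ?thesis .
  qed
  have P1: "\<forall>i<Suc n. p i \<in> sphere 0 1 \<and> 0 \<le> w i"
  proof (intro allI impI conjI)
    fix i assume "i < Suc n"
    show "p i \<in> sphere 0 1"
    proof (cases "i < n")
      case True
      then show ?thesis using subsetD[OF K(2) cK[OF True]] by (simp add: p_def)
    next
      case False
      then show ?thesis using s0 by (simp add: p_def)
    qed
    show "0 \<le> w i" by (simp add: w_def)
  qed
  have fin: "(\<forall>i<Suc n. p i \<in> sphere 0 1 \<and> 0 \<le> w i) \<and> (\<Sum>i<Suc n. w i) = 1 \<and>
     (\<forall>x. \<bar>potential \<mu> x - (\<Sum>i<Suc n. w i * norm (x - p i))\<bar> \<le> e)"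
    using P1 wsum err by blast
  then show ?thesis by (rule exI[where x="Suc n", OF exI[where x=p, OF exI[where x=w]]])
qed
lemma cch_real:
  fixes V :: "real set"
  assumes "V \<noteq> {}" "bdd_above V" "bdd_below V"
  shows "closure (convex hull V) = {Inf V..Sup V}"
proof
  have "convex hull V \<subseteq> {Inf V..Sup V}"
    by (rule hull_minimal) (auto simp: convex_real_interval intro: cInf_lower[OF _ assms(3)] cSup_upper[OF _ assms(2)])
  then show "closure (convex hull V) \<subseteq> {Inf V..Sup V}"
    by (rule closure_minimal) simp
next
  have c: "convex (closure (convex hull V))" by (simp add: convex_closure)
  have "closure V \<subseteq> closure (convex hull V)" by (intro closure_mono hull_subset)
  moreover have "Inf V \<in> closure V" using assms by (intro closure_contains_Inf)
  moreover have "Sup V \<in> closure V" using assms by (intro closure_contains_Sup)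
  ultimately have "closed_segment (Inf V) (Sup V) \<subseteq> closure (convex hull V)"
    using c by (meson convex_contains_segment subsetD)
  moreover have "Inf V \<le> Sup V" using assms by (meson all_not_in_conv cInf_lower cSup_upper order.trans)
  ultimately show "{Inf V..Sup V} \<subseteq> closure (convex hull V)"
    by (simp add: closed_segment_eq_real_ivl)
qed

theorem theorem3p1:
  shows "calA TYPE('a::real_normed_vector) = calR TYPE('a) \<and> calA TYPE('a) \<noteq> {}"
proof (cases "prob_measures_sphere = ({} :: 'a measure set)")
  case True
  then have "finsupp_prob_measures_sphere = ({} :: 'a measure set)"
    by (auto simp: finsupp_prob_measures_sphere_def)
  then show ?thesis using True by (simp add: calA_def calR_def)
next
  case False
  let ?S = "sphere (0::'a) 1"
  let ?M1 = "prob_measures_sphere :: 'a measure set"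
  obtain \<mu>0 :: "'a measure" where \<mu>0: "\<mu>0 \<in> ?M1" using False by blast
  have Sne: "?S \<noteq> {}"
  proof
    assume e: "?S = {}"
    interpret prob_space \<mu>0 by (rule M1_prob[OF \<mu>0])
    have "emeasure \<mu>0 UNIV = 0" using M1_null[OF \<mu>0] e by simp
    then show False using emeasure_space_1 M1_space[OF \<mu>0] by simp
  qed
  then obtain s0 where s0: "s0 \<in> ?S" by blast
  define m where "m \<mu> = Inf (potential \<mu> ` ?S)" for \<mu> :: "'a measure"
  define MM where "MM \<mu> = Sup (potential \<mu> ` ?S)" for \<mu> :: "'a measure"
  have bddA: "bdd_above (potential \<mu> ` ?S)" if "\<mu> \<in> ?M1" for \<mu>
    using M1_pot_le[OF that] by (intro bdd_aboveI[where M=2]) auto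
  have bddB: "bdd_below (potential \<mu> ` ?S)" if "\<mu> \<in> ?M1" for \<mu>
    using M1_pot_ge[OF that] by (intro bdd_belowI[where m=0]) auto
  have Aeq: "A_set \<mu> = {m \<mu>..MM \<mu>}" if "\<mu> \<in> ?M1" for \<mu>
    unfolding A_set_def m_def MM_def using Sne bddA[OF that] bddB[OF that] by (intro cch_real) auto
  have m_le: "m \<mu> \<le> potential \<mu> x" if "\<mu> \<in> ?M1" "x \<in> ?S" for \<mu> x
    unfolding m_def using bddB[OF that(1)] that(2) by (intro cInf_lower) auto
  have M_ge: "potential \<mu> x \<le> MM \<mu>" if "\<mu> \<in> ?M1" "x \<in> ?S" for \<mu> x
    unfolding MM_def using bddA[OF that(1)] that(2) by (intro cSup_upper) auto
  have m_glb: "t \<le> m \<mu>" if "\<And>x. x \<in> ?S \<Longrightarrow> t \<le> potential \<mu> x" for \<mu> t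
    unfolding m_def using Sne that by (intro cInf_greatest) auto
  have M_lub: "MM \<mu> \<le> t" if "\<And>x. x \<in> ?S \<Longrightarrow> potential \<mu> x \<le> t" for \<mu> t
    unfolding MM_def using Sne that by (intro cSup_least) auto
  have key: "m \<mu> \<le> MM \<nu>" if \<mu>: "\<mu> \<in> ?M1" and \<nu>: "\<nu> \<in> ?M1" for \<mu> \<nu>
  proof (rule field_le_epsilon)
    fix e :: real assume e: "0 < e"
    define \<epsilon> where "\<epsilon> = e / 2"
    have \<epsilon>: "\<epsilon> > 0" using e by (simp add: \<epsilon>_def)
    obtain n :: nat and p w where pw: "\<forall>i<n. p i \<in> ?S \<and> 0 \<le> w i" "(\<Sum>i<n. w i) = 1"
      "\<forall>x. \<bar>potential \<mu> x - (\<Sum>i<n. w i * norm (x - p i))\<bar> \<le> \<epsilon>"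
      using approx[OF \<mu> \<epsilon> s0] by blast
    obtain k :: nat and q v where qv: "\<forall>j<k. q j \<in> ?S \<and> 0 \<le> v j" "(\<Sum>j<k. v j) = 1"
      "\<forall>x. \<bar>potential \<nu> x - (\<Sum>j<k. v j * norm (x - q j))\<bar> \<le> \<epsilon>"
      using approx[OF \<nu> \<epsilon> s0] by blast
    define f where "f x = (\<Sum>i<n. w i * norm (x - p i))" for x
    define g where "g x = (\<Sum>j<k. v j * norm (x - q j))" for x
    have "m \<mu> = (\<Sum>j<k. v j * m \<mu>)" using qv(2) by (simp add: sum_distrib_right[symmetric])
    also have "\<dots> \<le> (\<Sum>j<k. v j * (f (q j) + \<epsilon>))"
    proof (rule sum_mono)
      fix j assume "j \<in> {..<k}"
      then have j: "q j \<in> ?S" "0 \<le> v j" using qv(1) by auto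
      have "m \<mu> \<le> potential \<mu> (q j)" by (rule m_le[OF \<mu> j(1)])
      also have "\<dots> \<le> f (q j) + \<epsilon>" using abs_le_D1[OF spec[OF pw(3), of "q j"]] unfolding f_def by linarith
      finally show "v j * m \<mu> \<le> v j * (f (q j) + \<epsilon>)" using j(2) by (rule mult_left_mono)
    qed
    also have "\<dots> = (\<Sum>j<k. v j * f (q j)) + \<epsilon>"
      using qv(2) by (simp add: distrib_left sum.distrib sum_distrib_right[symmetric])
    also have "(\<Sum>j<k. v j * f (q j)) = (\<Sum>i<n. w i * g (p i))"
    proof -
      have "(\<Sum>j<k. v j * f (q j)) = (\<Sum>j<k. \<Sum>i<n. w i * (v j * norm (p i - q j)))"
        unfolding f_def by (simp add: sum_distrib_left norm_minus_commute mult_ac)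
      also have "\<dots> = (\<Sum>i<n. \<Sum>j<k. w i * (v j * norm (p i - q j)))" by (rule sum.swap)
      also have "\<dots> = (\<Sum>i<n. w i * g (p i))" unfolding g_def by (simp add: sum_distrib_left)
      finally show ?thesis .
    qed
    also have "(\<Sum>i<n. w i * g (p i)) \<le> (\<Sum>i<n. w i * (MM \<nu> + \<epsilon>))"
    proof (rule sum_mono)
      fix i assume "i \<in> {..<n}"
      then have i: "p i \<in> ?S" "0 \<le> w i" using pw(1) by auto
      have "g (p i) \<le> potential \<nu> (p i) + \<epsilon>" using abs_le_D2[OF spec[OF qv(3), of "p i"]] unfolding g_def by linarith
      also have "\<dots> \<le> MM \<nu> + \<epsilon>" using M_ge[OF \<nu> i(1)] by simp
      finally show "w i * g (p i) \<le> w i * (MM \<nu> + \<epsilon>)" using i(2) by (rule mult_left_mono)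
    qed
    also have "(\<Sum>i<n. w i * (MM \<nu> + \<epsilon>)) = MM \<nu> + \<epsilon>"
      using pw(2) by (simp add: sum_distrib_right[symmetric])
    finally show "m \<mu> \<le> MM \<nu> + e" by (simp add: \<epsilon>_def)
  qed
  define c where "c = Sup (m ` ?M1)"
  have bddm: "bdd_above (m ` ?M1)"
    using key[OF _ \<mu>0] by (intro bdd_aboveI[where M="MM \<mu>0"]) auto
  have cA: "c \<in> A_set \<nu>" if \<nu>: "\<nu> \<in> ?M1" for \<nu>
  proof -
    have "m \<nu> \<le> c" unfolding c_def using bddm \<nu> by (intro cSup_upper) auto
    moreover have "c \<le> MM \<nu>" unfolding c_def using \<mu>0 key[OF _ \<nu>] by (intro cSup_least) auto
    ultimately show ?thesis using Aeq[OF \<nu>] by simp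
  qed
  have nonempty: "calA TYPE('a) \<noteq> {}"
    unfolding calA_def using cA by blast
  have sub: "finsupp_prob_measures_sphere \<subseteq> ?M1"
    by (auto simp: finsupp_prob_measures_sphere_def)
  have AR: "calA TYPE('a) \<subseteq> calR TYPE('a)"
    unfolding calA_def calR_def using sub by blast
  have RA: "calR TYPE('a) \<subseteq> calA TYPE('a)"
  proof
    fix t assume t: "t \<in> calR TYPE('a)"
    show "t \<in> calA TYPE('a)" unfolding calA_def
    proof
      fix \<mu> assume \<mu>: "\<mu> \<in> ?M1"
      have approxnu: "\<exists>\<nu>\<in>finsupp_prob_measures_sphere. \<forall>x \<in> ?S.
          potential \<nu> x \<le> potential \<mu> x + e \<and> potential \<mu> x \<le> potential \<nu> x + e"
        if e: "e > 0" for e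
      proof -
        obtain n :: nat and p w where pw: "\<forall>i<n. p i \<in> ?S \<and> 0 \<le> w i" "(\<Sum>i<n. w i) = 1"
          "\<forall>x. \<bar>potential \<mu> x - (\<Sum>i<n. w i * norm (x - p i))\<bar> \<le> e"
          using approx[OF \<mu> e s0] by blast
        obtain \<nu> where \<nu>: "\<nu> \<in> finsupp_prob_measures_sphere"
          "\<forall>x. potential \<nu> x = (\<Sum>i<n. w i * norm (x - p i))"
          using finmeas[of n p w] pw by blast
        show ?thesis
        proof (rule bexI[OF _ \<nu>(1)], intro ballI conjI)
          fix x
          show "potential \<nu> x \<le> potential \<mu> x + e" using abs_le_D2[OF spec[OF pw(3), of x]] \<nu>(2) by simp
          show "potential \<mu> x \<le> potential \<nu> x + e" using abs_le_D1[OF spec[OF pw(3), of x]] \<nu>(2) by simp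
        qed
      qed
      have "m \<mu> \<le> t"
      proof (rule field_le_epsilon)
        fix e :: real assume e: "0 < e"
        obtain \<nu> where \<nu>: "\<nu> \<in> finsupp_prob_measures_sphere"
          "\<forall>x \<in> ?S. potential \<nu> x \<le> potential \<mu> x + e \<and> potential \<mu> x \<le> potential \<nu> x + e"
          using approxnu[OF e] by blast
        have \<nu>M: "\<nu> \<in> ?M1" using \<nu>(1) sub by blast
        have "t \<in> A_set \<nu>" using t \<nu>(1) unfolding calR_def by blast
        then have "m \<nu> \<le> t" using Aeq[OF \<nu>M] by simp
        moreover have "m \<mu> - e \<le> m \<nu>"
        proof (rule m_glb)
          fix x assume x: "x \<in> ?S"
          show "m \<mu> - e \<le> potential \<nu> x" using m_le[OF \<mu> x] \<nu>(2) x by force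
        qed
        ultimately show "m \<mu> \<le> t + e" by simp
      qed
      moreover have "t \<le> MM \<mu>"
      proof (rule field_le_epsilon)
        fix e :: real assume e: "0 < e"
        obtain \<nu> where \<nu>: "\<nu> \<in> finsupp_prob_measures_sphere"
          "\<forall>x \<in> ?S. potential \<nu> x \<le> potential \<mu> x + e \<and> potential \<mu> x \<le> potential \<nu> x + e"
          using approxnu[OF e] by blast
        have \<nu>M: "\<nu> \<in> ?M1" using \<nu>(1) sub by blast
        have "t \<in> A_set \<nu>" using t \<nu>(1) unfolding calR_def by blast
        then have "t \<le> MM \<nu>" using Aeq[OF \<nu>M] by simp
        moreover have "MM \<nu> \<le> MM \<mu> + e"
        proof (rule M_lub)
          fix x assume x: "x \<in> ?S"
          show "potential \<nu> x \<le> MM \<mu> + e" using M_ge[OF \<mu> x] \<nu>(2) x by force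
        qed
        ultimately show "t \<le> MM \<mu> + e" by simp
      qed
      ultimately show "t \<in> A_set \<mu>" using Aeq[OF \<mu>] by simp
    qed
  qed
  show ?thesis using AR RA nonempty by blast
qed

end
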